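(* Let $p$ be a hyperbolic polynomial of degree $d$ on $\mathbb{R}^n$, and suppose an evaluation oracle for $p$ is given which returns $p(z)$ for any $z\in\mathbb{C}^n$ in time $\mathcal{T}_O$. Then for any $x\in\mathbb{R}^n$ (with $p(x)\neq0$) and any $w\in\mathbb{R}^n$, the vector $\nabla^2(-\ln p(x))\,w$ can be computed in $O(nd^2\mathcal{T}_O)$ time.
   Context: A hyperbolic polynomial is a real homogeneous polynomial $p$ for which there is a direction $e$ such that $t\mapsto p(te-x)$ has only real roots for all $x\in\mathbb{R}^n$. *)

theory Defs
  imports "HOL-Analysis.Analysis"
begin

text \<open>A polynomial in the variables z_0,...,z_(n-1) is given by a coefficient
  function on exponent vectors alpha :: nat => nat; it must have finite support and
  only use variables below n.\<close>

definition is_poly :: "nat \<Rightarrow> ((nat \<Rightarrow> nat) \<Rightarrow> real) \<Rightarrow> bool" where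
  "is_poly n c \<longleftrightarrow> finite {\<alpha>. c \<alpha> \<noteq> 0} \<and> (\<forall>\<alpha>. c \<alpha> \<noteq> 0 \<longrightarrow> (\<forall>i\<ge>n. \<alpha> i = 0))"

definition peval :: "nat \<Rightarrow> ((nat \<Rightarrow> nat) \<Rightarrow> real) \<Rightarrow> (nat \<Rightarrow> 'a::{real_algebra_1,comm_ring_1}) \<Rightarrow> 'a" where
  "peval n c z = (\<Sum>\<alpha>\<in>{\<alpha>. c \<alpha> \<noteq> 0}. of_real (c \<alpha>) * (\<Prod>i<n. z i ^ \<alpha> i))"

definition homog_poly :: "nat \<Rightarrow> nat \<Rightarrow> ((nat \<Rightarrow> nat) \<Rightarrow> real) \<Rightarrow> bool" where
  "homog_poly n d c \<longleftrightarrow> is_poly n c \<and> (\<exists>\<alpha>. c \<alpha> \<noteq> 0) \<and>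
     (\<forall>\<alpha>. c \<alpha> \<noteq> 0 \<longrightarrow> (\<Sum>i<n. \<alpha> i) = d)"

definition hyperbolic_poly :: "nat \<Rightarrow> nat \<Rightarrow> ((nat \<Rightarrow> nat) \<Rightarrow> real) \<Rightarrow> bool" where
  "hyperbolic_poly n d c \<longleftrightarrow> homog_poly n d c \<and>
     (\<exists>e::nat \<Rightarrow> real. peval n c e \<noteq> (0::real) \<and>
        (\<forall>x::nat \<Rightarrow> real. \<forall>t::complex.
            peval n c (\<lambda>i. t * of_real (e i) - of_real (x i)) = 0 \<longrightarrow> t \<in> \<real>))"

text \<open>Second partial derivative d_i d_j f at x (vectors are nat => real, coordinates i<n).\<close>
definition hess_entry :: "((nat \<Rightarrow> real) \<Rightarrow> real) \<Rightarrow> (nat \<Rightarrow> real) \<Rightarrow> nat \<Rightarrow> nat \<Rightarrow> real" where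
  "hess_entry f x i j =
     deriv (\<lambda>s. deriv (\<lambda>t. f ((x(j := x j + s))(i := (x(j := x j + s)) i + t))) 0) 0"

definition hess_vec :: "nat \<Rightarrow> ((nat \<Rightarrow> real) \<Rightarrow> real) \<Rightarrow> (nat \<Rightarrow> real) \<Rightarrow> (nat \<Rightarrow> real) \<Rightarrow> nat \<Rightarrow> real" where
  "hess_vec n f x w i = (\<Sum>j<n. hess_entry f x i j * w j)"

datatype instr =
    IConst complex
  | IX nat
  | IW nat
  | IAdd nat nat | ISub nat nat | IMul nat nat | IDiv nat nat
  | IOracle "nat list"

definition reg :: "complex list \<Rightarrow> nat \<Rightarrow> complex" where
  "reg rs k = (if k < length rs then rs ! k else 0)"

fun step :: "((nat \<Rightarrow> complex) \<Rightarrow> complex) \<Rightarrow> (nat \<Rightarrow> real) \<Rightarrow> (nat \<Rightarrow> real)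
              \<Rightarrow> complex list \<Rightarrow> instr \<Rightarrow> complex list" where
  "step orc x w rs (IConst a) = rs @ [a]"
| "step orc x w rs (IX i) = rs @ [of_real (x i)]"
| "step orc x w rs (IW i) = rs @ [of_real (w i)]"
| "step orc x w rs (IAdd a b) = rs @ [reg rs a + reg rs b]"
| "step orc x w rs (ISub a b) = rs @ [reg rs a - reg rs b]"
| "step orc x w rs (IMul a b) = rs @ [reg rs a * reg rs b]"
| "step orc x w rs (IDiv a b) = rs @ [reg rs a / reg rs b]"
| "step orc x w rs (IOracle args) =
     rs @ [orc (\<lambda>i. if i < length args then reg rs (args ! i) else 0)]"

definition run :: "((nat \<Rightarrow> complex) \<Rightarrow> complex) \<Rightarrow> (nat \<Rightarrow> real) \<Rightarrow> (nat \<Rightarrow> real)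
                    \<Rightarrow> instr list \<Rightarrow> complex list" where
  "run orc x w P = foldl (step orc x w) [] P"

fun instr_cost :: "real \<Rightarrow> instr \<Rightarrow> real" where
  "instr_cost T (IOracle _) = T"
| "instr_cost T _ = 1"

definition prog_cost :: "real \<Rightarrow> instr list \<Rightarrow> real" where
  "prog_cost T P = (\<Sum>ins\<leftarrow>P. instr_cost T ins)"

end

theory Submission
  imports Defs "HOL-Computational_Algebra.Polynomial"
begin


datatype ex = EC real | EV nat | EA ex ex | EM ex ex

fun ev :: "ex \<Rightarrow> (nat \<Rightarrow> real) \<Rightarrow> real" where
  "ev (EC a) y = a"
| "ev (EV k) y = y k"
| "ev (EA a b) y = ev a y + ev b y"
| "ev (EM a b) y = ev a y * ev b y"

fun dE :: "ex \<Rightarrow> (nat \<Rightarrow> real) \<Rightarrow> ex" where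
  "dE (EC a) u = EC 0"
| "dE (EV k) u = EC (u k)"
| "dE (EA a b) u = EA (dE a u) (dE b u)"
| "dE (EM a b) u = EA (EM (dE a u) b) (EM a (dE b u))"

fun vb :: "nat \<Rightarrow> ex \<Rightarrow> bool" where
  "vb n (EC a) = True"
| "vb n (EV k) = (k < n)"
| "vb n (EA a b) = (vb n a \<and> vb n b)"
| "vb n (EM a b) = (vb n a \<and> vb n b)"

definition dl :: "nat \<Rightarrow> nat \<Rightarrow> real" where "dl i k = (if k = i then 1 else 0)"

lemma ev_deriv:
  "((\<lambda>s. ev e (\<lambda>i. y i + s * u i)) has_real_derivative ev (dE e u) (\<lambda>i. y i + s0 * u i)) (at s0)"
  by (induction e) (auto intro!: derivative_eq_intros)

lemma vb_dE: "vb n e \<Longrightarrow> vb n (dE e u)"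
  by (induction e) auto

lemma ev_lin: "vb n e \<Longrightarrow> ev (dE e u) y = (\<Sum>j<n. u j * ev (dE e (dl j)) y)"
proof (induction e)
  case (EV k)
  have "(\<Sum>j<n. u j * ev (dE (EV k) (dl j)) y) = (\<Sum>j<n. if j = k then u j else 0)"
    by (rule sum.cong) (auto simp: dl_def)
  then show ?case using EV by simp
next
  case (EA a b) then show ?case by (simp add: sum.distrib distrib_left)
next
  case (EM a b) then show ?case
    by (simp add: sum.distrib algebra_simps sum_distrib_left sum_distrib_right)
qed auto

lemma ev_add1: "ev (dE e (\<lambda>i. u i + v i)) y = ev (dE e u) y + ev (dE e v) y"
  by (induction e) (auto simp: algebra_simps)

lemma ev_add2: "ev (dE (dE e (\<lambda>i. u i + v i)) z) y = ev (dE (dE e u) z) y + ev (dE (dE e v) z) y"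
  by (induction e) (auto simp: algebra_simps ev_add1)

lemma ev_sym: "ev (dE (dE e u) v) y = ev (dE (dE e v) u) y"
  by (induction e) (auto simp: algebra_simps)

lemma deriv_ln_abs:
  fixes g :: "real \<Rightarrow> real"
  assumes d: "(g has_real_derivative g') (at t0)" and nz: "g t0 \<noteq> 0"
  shows "((\<lambda>t. ln \<bar>g t\<bar>) has_real_derivative g' / g t0) (at t0)"
proof -
  have c: "(g \<longlongrightarrow> g t0) (nhds t0)"
    using DERIV_isCont[OF d] by (simp add: isCont_def tendsto_at_iff_tendsto_nhds)
  show ?thesis
  proof (cases "g t0 > 0")
    case True
    have ev: "eventually (\<lambda>t. g t > 0) (nhds t0)"
      using order_tendstoD(1)[OF c True] .
    have "((\<lambda>t. ln (g t)) has_real_derivative g' / g t0) (at t0)"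
      using DERIV_chain2[OF DERIV_ln_divide[OF True] d] by simp
    moreover have "eventually (\<lambda>t. ln \<bar>g t\<bar> = ln (g t)) (nhds t0)"
      using ev by eventually_elim auto
    ultimately show ?thesis by (subst DERIV_cong_ev[OF refl _ refl]) auto
  next
    case False
    then have neg: "g t0 < 0" using nz by auto
    have ev: "eventually (\<lambda>t. g t < 0) (nhds t0)"
      using order_tendstoD(2)[OF c neg] .
    have "((\<lambda>t. ln (- g t)) has_real_derivative (- g') / (- g t0)) (at t0)"
      using DERIV_chain2[OF DERIV_ln_divide DERIV_minus[OF d]] neg by simp
    moreover have "eventually (\<lambda>t. ln \<bar>g t\<bar> = ln (- g t)) (nhds t0)"
      using ev by eventually_elim auto
    ultimately show ?thesis by (subst DERIV_cong_ev[OF refl _ refl]) auto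
  qed
qed

definition repr :: "nat \<Rightarrow> ((nat \<Rightarrow> real) \<Rightarrow> real) \<Rightarrow> bool" where
  "repr n F \<longleftrightarrow> (\<exists>e. vb n e \<and> (\<forall>y. ev e y = F y))"

lemma repr_const: "repr n (\<lambda>y. a)"
  unfolding repr_def by (rule exI[of _ "EC a"]) simp

lemma repr_var: "k < n \<Longrightarrow> repr n (\<lambda>y. y k)"
  unfolding repr_def by (rule exI[of _ "EV k"]) simp

lemma repr_add: "repr n F \<Longrightarrow> repr n G \<Longrightarrow> repr n (\<lambda>y. F y + G y)"
  unfolding repr_def by (metis ev.simps(3) vb.simps(3))

lemma repr_mult: "repr n F \<Longrightarrow> repr n G \<Longrightarrow> repr n (\<lambda>y. F y * G y)"
  unfolding repr_def by (metis ev.simps(4) vb.simps(4))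

lemma repr_sum: "finite A \<Longrightarrow> (\<forall>a\<in>A. repr n (f a)) \<Longrightarrow> repr n (\<lambda>y. \<Sum>a\<in>A. f a y)"
proof (induction A rule: finite_induct)
  case empty then show ?case using repr_const[of n 0] by simp
next
  case (insert a A)
  then show ?case using repr_add[of n "f a" "\<lambda>y. \<Sum>a\<in>A. f a y"] by simp
qed

lemma repr_prod: "finite A \<Longrightarrow> (\<forall>a\<in>A. repr n (f a)) \<Longrightarrow> repr n (\<lambda>y. \<Prod>a\<in>A. f a y)"
proof (induction A rule: finite_induct)
  case empty then show ?case using repr_const[of n 1] by simp
next
  case (insert a A)
  then show ?case using repr_mult[of n "f a" "\<lambda>y. \<Prod>a\<in>A. f a y"] by simp
qed

lemma repr_pow: "repr n F \<Longrightarrow> repr n (\<lambda>y. F y ^ m)"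
proof (induction m)
  case 0 then show ?case using repr_const[of n 1] by simp
next
  case (Suc m) then show ?case using repr_mult[of n F "\<lambda>y. F y ^ m"] by simp
qed

lemma peval_real: "peval n c (y::nat \<Rightarrow> real) = (\<Sum>\<alpha>\<in>{\<alpha>. c \<alpha> \<noteq> 0}. c \<alpha> * (\<Prod>i<n. y i ^ \<alpha> i))"
  unfolding peval_def by simp

lemma repr_peval: "is_poly n c \<Longrightarrow> repr n (peval n c)"
proof -
  assume "is_poly n c"
  then have fin: "finite {\<alpha>. c \<alpha> \<noteq> 0}" by (simp add: is_poly_def)
  have "repr n (\<lambda>y. \<Sum>\<alpha>\<in>{\<alpha>. c \<alpha> \<noteq> 0}. c \<alpha> * (\<Prod>i<n. y i ^ \<alpha> i))"
    by (intro repr_sum fin ballI repr_mult repr_const repr_prod repr_pow repr_var) auto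
  then show ?thesis by (simp add: peval_real[abs_def])
qed

lemma line_poly:
  assumes "homog_poly n d c"
  shows "\<exists>Q::real poly. degree Q \<le> d \<and> (\<forall>s. poly Q s = peval n c (\<lambda>i. y i + s * u i))"
proof -
  let ?S = "{\<alpha>. c \<alpha> \<noteq> 0}"
  have fin: "finite ?S" and hd: "\<And>\<alpha>. c \<alpha> \<noteq> 0 \<Longrightarrow> (\<Sum>i<n. \<alpha> i) = d"
    using assms by (auto simp: homog_poly_def is_poly_def)
  define Q where "Q = (\<Sum>\<alpha>\<in>?S. smult (c \<alpha>) (\<Prod>i<n. [:y i, u i:] ^ \<alpha> i))"
  have "degree Q \<le> d"
    unfolding Q_def
  proof (intro degree_sum_le fin)
    fix \<alpha> assume a: "\<alpha> \<in> ?S"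
    have "degree (smult (c \<alpha>) (\<Prod>i<n. [:y i, u i:] ^ \<alpha> i)) \<le> degree (\<Prod>i<n. [:y i, u i:] ^ \<alpha> i)"
      by (rule degree_smult_le)
    also have "\<dots> \<le> (\<Sum>i<n. degree ([:y i, u i:] ^ \<alpha> i))"
      using degree_prod_sum_le[of "{..<n}" "\<lambda>i. [:y i, u i:] ^ \<alpha> i"] by (simp add: o_def)
    also have "\<dots> \<le> (\<Sum>i<n. \<alpha> i)"
    proof (rule sum_mono)
      fix i
      have "degree ([:y i, u i:] ^ \<alpha> i) \<le> degree [:y i, u i:] * \<alpha> i" by (rule degree_power_le)
      also have "\<dots> \<le> 1 * \<alpha> i" by (intro mult_right_mono) auto
      finally show "degree ([:y i, u i:] ^ \<alpha> i) \<le> \<alpha> i" by simp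
    qed
    also have "\<dots> = d" using a hd by auto
    finally show "degree (smult (c \<alpha>) (\<Prod>i<n. [:y i, u i:] ^ \<alpha> i)) \<le> d" .
  qed
  moreover have "\<forall>s. poly Q s = peval n c (\<lambda>i. y i + s * u i)"
    by (simp add: Q_def peval_real poly_sum poly_prod)
  ultimately show ?thesis by blast
qed



definition lam :: "nat \<Rightarrow> nat \<Rightarrow> nat \<Rightarrow> real" where
  "lam d m = (SOME l. \<forall>Q::real poly. degree Q \<le> d \<longrightarrow> coeff Q m = (\<Sum>k\<le>d. l k * poly Q (real k)))"

lemma lam_ex: "\<exists>l. \<forall>Q::real poly. degree Q \<le> d \<longrightarrow> coeff Q m = (\<Sum>k\<le>d. l k * poly Q (real k))"
proof -
  define L where "L k = (\<Prod>j\<in>{..d}-{k}. smult (1 / (real k - real j)) [:- real j, 1:])" for k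
  have polyL: "poly (L k) (real i) = (if i = k then 1 else 0)" if "i \<le> d" "k \<le> d" for i k
  proof (cases "i = k")
    case True
    have "poly (L k) (real k) = (\<Prod>j\<in>{..d}-{k}. 1)"
      unfolding L_def poly_prod
    proof (rule prod.cong)
      fix j assume "j \<in> {..d}-{k}"
      then have "real k - real j \<noteq> 0" by auto
      then show "poly (smult (1 / (real k - real j)) [:- real j, 1:]) (real k) = 1"
        by (simp add: diff_divide_distrib[symmetric])
    qed simp
    then show ?thesis using True by simp
  next
    case False
    then have "i \<in> {..d}-{k}" using that by auto
    have "poly (L k) (real i) = (\<Prod>j\<in>{..d}-{k}. poly (smult (1 / (real k - real j)) [:- real j, 1:]) (real i))"
      unfolding L_def poly_prod ..
    also have "\<dots> = 0"
      using \<open>i \<in> {..d}-{k}\<close> by (subst prod_zero_iff) auto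
    finally show ?thesis using False by simp
  qed
  have degL: "degree (L k) \<le> d" if "k \<le> d" for k
  proof -
    have "degree (L k) \<le> (\<Sum>j\<in>{..d}-{k}. degree (smult (1 / (real k - real j)) [:- real j, 1:]))"
      unfolding L_def using degree_prod_sum_le[of "{..d}-{k}" "\<lambda>j. smult (1 / (real k - real j)) [:- real j, 1:]"]
      by (simp only: comp_def finite_Diff finite_atMost)
    also have "\<dots> \<le> (\<Sum>j\<in>{..d}-{k}. 1)"
    proof (rule sum_mono)
      fix j
      show "degree (smult (1 / (real k - real j)) [:- real j, 1:]) \<le> 1"
        by (rule order_trans[OF degree_smult_le]) simp
    qed
    also have "\<dots> = d" using that by simp
    finally show ?thesis .
  qed
  show ?thesis
  proof (intro exI allI impI)
    fix Q :: "real poly" assume dQ: "degree Q \<le> d"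
    let ?R = "\<Sum>k\<le>d. smult (poly Q (real k)) (L k)"
    have "Q = ?R"
    proof (rule poly_eqI_degree[of "real ` {..d}"])
      fix x assume "x \<in> real ` {..d}"
      then obtain i where i: "i \<le> d" "x = real i" by auto
      have "poly ?R x = (\<Sum>k\<le>d. poly Q (real k) * (if i = k then 1 else 0))"
        using i by (simp add: poly_sum polyL)
      also have "\<dots> = poly Q x" using i by (simp add: if_distrib cong: if_cong)
      finally show "poly Q x = poly ?R x" by simp
    next
      have "card (real ` {..d}) = Suc d" by (simp add: card_image)
      moreover have "degree ?R \<le> d"
        by (rule degree_sum_le) (auto intro: order_trans[OF degree_smult_le] degL)
      ultimately show "degree Q < card (real ` {..d})" "degree ?R < card (real ` {..d})"
        using dQ by auto
    qed
    then have "coeff Q m = coeff ?R m" by simp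
    also have "\<dots> = (\<Sum>k\<le>d. coeff (L k) m * poly Q (real k))"
      by (simp add: coeff_sum mult.commute)
    finally show "coeff Q m = (\<Sum>k\<le>d. coeff (L k) m * poly Q (real k))" .
  qed
qed

lemma lam_prop: "degree (Q::real poly) \<le> d \<Longrightarrow> coeff Q m = (\<Sum>k\<le>d. lam d m k * poly Q (real k))"
  using someI_ex[OF lam_ex[of d m]] unfolding lam_def by blast

lemma coeff12:
  assumes "\<forall>s. poly Q s = ev e (\<lambda>i. y i + s * u i)"
  shows "coeff Q 1 = ev (dE e u) y" and "coeff Q 2 = ev (dE (dE e u) u) y / 2"
proof -
  have y0: "(\<lambda>i. y i + 0 * u i) = y" by simp
  have fQ: "poly Q = (\<lambda>s. ev e (\<lambda>i. y i + s * u i))" using assms by auto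
  have pd: "poly (pderiv Q) s = ev (dE e u) (\<lambda>i. y i + s * u i)" for s
    using poly_DERIV[of Q s] ev_deriv[of e y u s] unfolding fQ by (rule DERIV_unique)
  show "coeff Q 1 = ev (dE e u) y"
    using pd[of 0] by (simp add: poly_0_coeff_0 coeff_pderiv)
  have fQ': "poly (pderiv Q) = (\<lambda>s. ev (dE e u) (\<lambda>i. y i + s * u i))" using pd by auto
  have "poly (pderiv (pderiv Q)) 0 = ev (dE (dE e u) u) (\<lambda>i. y i + 0 * u i)"
    using poly_DERIV[of "pderiv Q" 0] ev_deriv[of "dE e u" y u 0] unfolding fQ' by (rule DERIV_unique)
  then show "coeff Q 2 = ev (dE (dE e u) u) y / 2"
    by (simp add: poly_0_coeff_0 coeff_pderiv numeral_2_eq_2)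
qed

lemma interp:
  assumes h: "homog_poly n d c" and e: "\<forall>y. ev e y = peval n c y"
  shows "(\<Sum>k\<le>d. lam d 1 k * peval n c (\<lambda>i. y i + real k * u i)) = ev (dE e u) y"
    and "(\<Sum>k\<le>d. lam d 2 k * peval n c (\<lambda>i. y i + real k * u i)) = ev (dE (dE e u) u) y / 2"
proof -
  obtain Q where Q: "degree Q \<le> d" "\<forall>s. poly Q s = peval n c (\<lambda>i. y i + s * u i)"
    using line_poly[OF h] by blast
  have Q': "\<forall>s. poly Q s = ev e (\<lambda>i. y i + s * u i)" using Q e by simp
  show "(\<Sum>k\<le>d. lam d 1 k * peval n c (\<lambda>i. y i + real k * u i)) = ev (dE e u) y"
    using lam_prop[OF Q(1), of 1] coeff12(1)[OF Q'] Q(2) by simp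
  show "(\<Sum>k\<le>d. lam d 2 k * peval n c (\<lambda>i. y i + real k * u i)) = ev (dE (dE e u) u) y / 2"
    using lam_prop[OF Q(1), of 2] coeff12(2)[OF Q'] Q(2) by simp
qed



lemma fieldeq: "(P::real) \<noteq> 0 \<Longrightarrow> ((- B) * P - (- A) * G) / (P * P) = - B / P + A * G / P^2"
  by (simp add: field_simps power2_eq_square)

lemma sumeq: "(\<Sum>j<n. (- B j / (P::real) + A * G j / P^2) * w j) =
   - (\<Sum>j<n. w j * B j) / P + A * (\<Sum>j<n. w j * G j) / P^2"
proof -
  have "(\<Sum>j<n. (- B j / (P::real) + A * G j / P^2) * w j) = (\<Sum>j<n. (- (w j * B j) / P) + (A / P^2) * (w j * G j))"
    by (rule sum.cong) (auto simp: algebra_simps)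
  also have "\<dots> = - (\<Sum>j<n. w j * B j) / P + (A / P^2) * (\<Sum>j<n. w j * G j)"
    by (simp add: sum_subtractf sum.distrib sum_negf sum_divide_distrib sum_distrib_left)
  finally show ?thesis by simp
qed

lemma hess_entry_eq:
  assumes e: "\<forall>y. ev e y = F y" and nz: "F x \<noteq> 0"
  shows "hess_entry (\<lambda>y. - ln \<bar>F y\<bar>) x i j =
     - ev (dE (dE e (dl i)) (dl j)) x / F x + ev (dE e (dl i)) x * ev (dE e (dl j)) x / (F x)^2"
proof -
  have upd: "(x(j := x j + s))(i := (x(j := x j + s)) i + t) = (\<lambda>k. (x k + s * dl j k) + t * dl i k)" for s t
    by (auto simp: dl_def fun_eq_iff)
  define ys where "ys s = (\<lambda>k. x k + s * dl j k)" for s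
  have Fe: "F = ev e" using e by auto
  have inner: "deriv (\<lambda>t. - ln \<bar>F ((x(j := x j + s))(i := (x(j := x j + s)) i + t))\<bar>) 0
      = - ev (dE e (dl i)) (ys s) / ev e (ys s)" if nzs: "ev e (ys s) \<noteq> 0" for s
  proof -
    have d1: "((\<lambda>t. ev e (\<lambda>k. ys s k + t * dl i k)) has_real_derivative ev (dE e (dl i)) (ys s)) (at 0)"
      using ev_deriv[of e "ys s" "dl i" 0] by simp
    have "((\<lambda>t. ln \<bar>ev e (\<lambda>k. ys s k + t * dl i k)\<bar>) has_real_derivative ev (dE e (dl i)) (ys s) / ev e (ys s)) (at 0)"
      using deriv_ln_abs[OF d1] nzs by simp
    then have "((\<lambda>t. - ln \<bar>ev e (\<lambda>k. ys s k + t * dl i k)\<bar>) has_real_derivative - (ev (dE e (dl i)) (ys s) / ev e (ys s))) (at 0)"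
      by (rule DERIV_minus)
    then show ?thesis unfolding upd Fe ys_def by (simp add: DERIV_imp_deriv)
  qed
  have dP: "((\<lambda>s. ev e (ys s)) has_real_derivative ev (dE e (dl j)) x) (at 0)"
    using ev_deriv[of e x "dl j" 0] unfolding ys_def by simp
  have dA: "((\<lambda>s. ev (dE e (dl i)) (ys s)) has_real_derivative ev (dE (dE e (dl i)) (dl j)) x) (at 0)"
    using ev_deriv[of "dE e (dl i)" x "dl j" 0] unfolding ys_def by simp
  have ys0: "ys 0 = x" by (simp add: ys_def)
  have P0: "ev e (ys 0) \<noteq> 0" using nz e ys0 by simp
  have ctn: "((\<lambda>s. ev e (ys s)) \<longlongrightarrow> ev e (ys 0)) (at 0)"
    using DERIV_isCont[OF dP] by (simp add: isCont_def)
  have evnz: "eventually (\<lambda>s. ev e (ys s) \<noteq> 0) (at 0)"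
    using tendsto_imp_eventually_ne[OF ctn P0] .
  have dq: "((\<lambda>s. - ev (dE e (dl i)) (ys s) / ev e (ys s)) has_real_derivative
      ((- ev (dE (dE e (dl i)) (dl j)) x) * ev e (ys 0) - (- ev (dE e (dl i)) (ys 0)) * ev (dE e (dl j)) x) / (ev e (ys 0) * ev e (ys 0))) (at 0)"
    by (rule DERIV_divide[OF DERIV_minus[OF dA] dP P0])
  have ev2: "eventually (\<lambda>s. deriv (\<lambda>t. - ln \<bar>F ((x(j := x j + s))(i := (x(j := x j + s)) i + t))\<bar>) 0
      = - ev (dE e (dl i)) (ys s) / ev e (ys s)) (at 0)"
    using evnz by eventually_elim (rule inner)
  have v0: "deriv (\<lambda>t. - ln \<bar>F ((x(j := x j + 0))(i := (x(j := x j + 0)) i + t))\<bar>) 0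
      = - ev (dE e (dl i)) (ys 0) / ev e (ys 0)"
    using inner[OF P0] by simp
  have "((\<lambda>s. deriv (\<lambda>t. - ln \<bar>F ((x(j := x j + s))(i := (x(j := x j + s)) i + t))\<bar>) 0) has_real_derivative
      ((- ev (dE (dE e (dl i)) (dl j)) x) * ev e (ys 0) - (- ev (dE e (dl i)) (ys 0)) * ev (dE e (dl j)) x) / (ev e (ys 0) * ev e (ys 0))) (at 0)"
    by (subst has_field_derivative_cong_eventually[OF ev2 v0]) (rule dq)
  then have "hess_entry (\<lambda>y. - ln \<bar>F y\<bar>) x i j =
      ((- ev (dE (dE e (dl i)) (dl j)) x) * ev e (ys 0) - (- ev (dE e (dl i)) (ys 0)) * ev (dE e (dl j)) x) / (ev e (ys 0) * ev e (ys 0))"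
    unfolding hess_entry_def by (rule DERIV_imp_deriv)
  also have "\<dots> = - ev (dE (dE e (dl i)) (dl j)) x / F x + ev (dE e (dl i)) x * ev (dE e (dl j)) x / (F x)^2"
    using nz unfolding ys0 Fe by (rule fieldeq)
  finally show ?thesis .
qed

lemma hess_vec_eq:
  assumes vb: "vb n e" and e: "\<forall>y. ev e y = F y" and nz: "F x \<noteq> 0"
  shows "hess_vec n (\<lambda>y. - ln \<bar>F y\<bar>) x w i =
     - ev (dE (dE e (dl i)) w) x / F x + ev (dE e (dl i)) x * ev (dE e w) x / (F x)^2"
proof -
  have "hess_vec n (\<lambda>y. - ln \<bar>F y\<bar>) x w i =
     (\<Sum>j<n. (- ev (dE (dE e (dl i)) (dl j)) x / F x + ev (dE e (dl i)) x * ev (dE e (dl j)) x / (F x)^2) * w j)"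
    unfolding hess_vec_def using hess_entry_eq[OF e nz] by simp
  also have "\<dots> = - (\<Sum>j<n. w j * ev (dE (dE e (dl i)) (dl j)) x) / F x
       + ev (dE e (dl i)) x * (\<Sum>j<n. w j * ev (dE e (dl j)) x) / (F x)^2"
    by (rule sumeq)
  also have "\<dots> = - ev (dE (dE e (dl i)) w) x / F x + ev (dE e (dl i)) x * ev (dE e w) x / (F x)^2"
    using ev_lin[OF vb_dE[OF vb], of "dl i" w x] ev_lin[OF vb, of w x] by simp
  finally show ?thesis .
qed

lemma polar:
  "ev (dE (dE e (\<lambda>k. dl i k + w k)) (\<lambda>k. dl i k + w k)) x / 2
   - ev (dE (dE e (dl i)) (dl i)) x / 2 - ev (dE (dE e w) w) x / 2 = ev (dE (dE e (dl i)) w) x"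
proof -
  have "ev (dE (dE e (\<lambda>k. dl i k + w k)) (\<lambda>k. dl i k + w k)) x =
     ev (dE (dE e (dl i)) (dl i)) x + 2 * ev (dE (dE e (dl i)) w) x + ev (dE (dE e w) w) x"
    by (simp add: ev_add1 ev_add2 ev_sym[of e w "dl i"])
  then show ?thesis by linarith
qed



fun ival :: "((nat \<Rightarrow> complex) \<Rightarrow> complex) \<Rightarrow> (nat \<Rightarrow> real) \<Rightarrow> (nat \<Rightarrow> real) \<Rightarrow> (nat \<Rightarrow> complex) \<Rightarrow> instr \<Rightarrow> complex" where
  "ival orc x w R (IConst a) = a"
| "ival orc x w R (IX i) = of_real (x i)"
| "ival orc x w R (IW i) = of_real (w i)"
| "ival orc x w R (IAdd a b) = R a + R b"
| "ival orc x w R (ISub a b) = R a - R b"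
| "ival orc x w R (IMul a b) = R a * R b"
| "ival orc x w R (IDiv a b) = R a / R b"
| "ival orc x w R (IOracle args) = orc (\<lambda>i. if i < length args then R (args ! i) else 0)"

fun refs :: "instr \<Rightarrow> nat set" where
  "refs (IAdd a b) = {a, b}"
| "refs (ISub a b) = {a, b}"
| "refs (IMul a b) = {a, b}"
| "refs (IDiv a b) = {a, b}"
| "refs (IOracle args) = set args"
| "refs _ = {}"

lemma step_eq: "step orc x w rs ins = rs @ [ival orc x w (reg rs) ins]"
  by (cases ins) auto

lemma ival_cong:
  assumes "\<forall>a\<in>refs ins. R a = R' a"
  shows "ival orc x w R ins = ival orc x w R' ins"
proof (cases ins)
  case (IOracle args)
  have "(\<lambda>i. if i < length args then R (args ! i) else 0) = (\<lambda>i. if i < length args then R' (args ! i) else 0)"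
    using assms IOracle by (auto simp: fun_eq_iff)
  then show ?thesis using IOracle by simp
qed (use assms in auto)

lemma foldl_app: "\<exists>zs. foldl (step orc x w) rs P = rs @ zs \<and> length zs = length P"
proof (induction P arbitrary: rs)
  case Nil then show ?case by simp
next
  case (Cons a P)
  obtain zs where "foldl (step orc x w) (step orc x w rs a) P = step orc x w rs a @ zs" "length zs = length P"
    using Cons by blast
  then have "foldl (step orc x w) rs (a # P) = rs @ ([ival orc x w (reg rs) a] @ zs)"
    by (simp only: foldl_Cons step_eq append.assoc)
  then show ?case using \<open>length zs = length P\<close> by (intro exI[of _ "[ival orc x w (reg rs) a] @ zs"]) simp
qed

lemma length_run: "length (run orc x w P) = length P"
  using foldl_app[of orc x w "[]" P] unfolding run_def by auto

lemma run_nth: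
  assumes m: "m < length P" and r: "\<forall>a\<in>refs (P ! m). a < m"
  shows "reg (run orc x w P) m = ival orc x w (reg (run orc x w P)) (P ! m)"
proof -
  let ?A = "take m P"
  have P: "P = ?A @ [P ! m] @ drop (Suc m) P" using m by (simp add: id_take_nth_drop)
  define v where "v = ival orc x w (reg (run orc x w ?A)) (P ! m)"
  have "run orc x w (?A @ [P ! m]) = run orc x w ?A @ [v]"
    by (simp add: run_def step_eq v_def)
  moreover obtain zs where "foldl (step orc x w) (run orc x w (?A @ [P ! m])) (drop (Suc m) P) = run orc x w (?A @ [P ! m]) @ zs"
    using foldl_app by blast
  ultimately have runP: "run orc x w P = run orc x w ?A @ [v] @ zs"
    using P unfolding run_def by (metis append.assoc foldl_append)
  have lA: "length (run orc x w ?A) = m" using m by (simp add: length_run)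
  have "reg (run orc x w P) m = v" unfolding reg_def runP using lA by (simp add: nth_append)
  moreover have "\<forall>a\<in>refs (P ! m). reg (run orc x w ?A) a = reg (run orc x w P) a"
    using r lA unfolding reg_def runP by (auto simp: nth_append)
  ultimately show ?thesis unfolding v_def by (simp add: ival_cong)
qed

definition bG :: "nat \<Rightarrow> nat \<Rightarrow> nat" where "bG n d = n + 4 * (Suc d * n)"
definition bD :: "nat \<Rightarrow> nat \<Rightarrow> nat" where "bD n d = bG n d + Suc d"
definition bW :: "nat \<Rightarrow> nat \<Rightarrow> nat" where "bW n d = bD n d + 3 * Suc d + 1"
definition bI :: "nat \<Rightarrow> nat \<Rightarrow> nat" where "bI n d = bW n d + 3 * Suc d + 1"
definition SS :: "nat \<Rightarrow> nat" where "SS d = 14 * Suc d + 10"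
definition LL :: "nat \<Rightarrow> nat \<Rightarrow> nat" where "LL n d = bI n d + n * SS d"
definition Vr :: "nat \<Rightarrow> nat \<Rightarrow> nat \<Rightarrow> nat" where "Vr n k j = n + 4 * (k * n + j) + 3"

definition comboI :: "(nat \<Rightarrow> real) \<Rightarrow> nat \<Rightarrow> nat \<Rightarrow> nat \<Rightarrow> nat \<Rightarrow> instr" where
  "comboI l src st r m = (if r = 0 then IConst 0
     else if (r - 1) mod 3 = 0 then IConst (of_real (l ((r - 1) div 3)))
     else if (r - 1) mod 3 = 1 then IMul (m - 1) (src + st * ((r - 1) div 3))
     else IAdd (m - 3) (m - 1))"

definition Vins :: "nat \<Rightarrow> nat \<Rightarrow> nat \<Rightarrow> instr" where
  "Vins n q m = (if q mod 4 = 0 then IW ((q div 4) mod n)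
     else if q mod 4 = 1 then IConst (of_nat ((q div 4) div n))
     else if q mod 4 = 2 then IMul (m - 2) (m - 1)
     else IAdd ((q div 4) mod n) (m - 1))"

definition Iins :: "nat \<Rightarrow> nat \<Rightarrow> nat \<Rightarrow> nat \<Rightarrow> nat \<Rightarrow> instr" where
  "Iins n d i r m = (let K = Suc d; b = m - r in
     if r < 5 * K then
       (if r mod 5 = 0 then IConst (of_nat (r div 5))
        else if r mod 5 = 1 then IAdd i (m - 1)
        else if r mod 5 = 2 then IOracle ([0..<n][i := m - 1])
        else if r mod 5 = 3 then IAdd (Vr n (r div 5) i) (m - 3)
        else IOracle ((map (Vr n (r div 5)) [0..<n])[i := m - 1]))
     else if r < 8 * K + 1 then comboI (lam d 1) (b + 2) 5 (r - 5 * K) m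
     else if r < 11 * K + 2 then comboI (lam d 2) (b + 2) 5 (r - (8 * K + 1)) m
     else if r < 14 * K + 3 then comboI (lam d 2) (b + 4) 5 (r - (11 * K + 2)) m
     else if r = 14 * K + 3 then ISub (b + 14 * K + 2) (b + 11 * K + 1)
     else if r = 14 * K + 4 then ISub (m - 1) (bW n d + 3 * K)
     else if r = 14 * K + 5 then IDiv (m - 1) (bG n d)
     else if r = 14 * K + 6 then IMul (b + 8 * K) (bD n d + 3 * K)
     else if r = 14 * K + 7 then IMul (bG n d) (bG n d)
     else if r = 14 * K + 8 then IDiv (m - 2) (m - 1)
     else ISub (m - 1) (m - 4))"

definition ins :: "nat \<Rightarrow> nat \<Rightarrow> nat \<Rightarrow> instr" where
  "ins n d m = (if m < n then IX m
     else if m < bG n d then Vins n (m - n) m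
     else if m < bD n d then IOracle (map (Vr n (m - bG n d)) [0..<n])
     else if m < bW n d then comboI (lam d 1) (bG n d) 1 (m - bD n d) m
     else if m < bI n d then comboI (lam d 2) (bG n d) 1 (m - bW n d) m
     else Iins n d ((m - bI n d) div SS d) ((m - bI n d) mod SS d) m)"

definition prog :: "nat \<Rightarrow> nat \<Rightarrow> instr list" where
  "prog n d = map (ins n d) [0..<LL n d]"

definition RR :: "((nat \<Rightarrow> complex) \<Rightarrow> complex) \<Rightarrow> (nat \<Rightarrow> real) \<Rightarrow> (nat \<Rightarrow> real) \<Rightarrow> nat \<Rightarrow> nat \<Rightarrow> nat \<Rightarrow> complex" where
  "RR orc x w n d = reg (run orc x w (prog n d))"

lemma RR_eq:
  assumes "m < LL n d" "\<forall>a\<in>refs (ins n d m). a < m"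
  shows "RR orc x w n d m = ival orc x w (RR orc x w n d) (ins n d m)"
  using run_nth[of m "prog n d" orc x w] assms unfolding RR_def prog_def by simp

lemma kn_lt: "k < Suc d \<Longrightarrow> j < n \<Longrightarrow> k * n + j < Suc d * n"
proof -
  assume a: "k < Suc d" "j < n"
  have "k * n + j < Suc k * n" using a by simp
  also have "\<dots> \<le> Suc d * n" using a by (intro mult_le_mono1) simp
  finally show ?thesis .
qed

lemma LL_ge: "bI n d + n * SS d \<le> LL n d" by (simp add: LL_def)

lemma ins_X: "m < n \<Longrightarrow> ins n d m = IX m"
  by (simp add: ins_def)

lemma ins_V: "q < 4 * (Suc d * n) \<Longrightarrow> ins n d (n + q) = Vins n q (n + q)"
  by (simp add: ins_def bG_def)

lemma ins_G: "k < Suc d \<Longrightarrow> ins n d (bG n d + k) = IOracle (map (Vr n k) [0..<n])"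
  by (simp add: ins_def bD_def bG_def)

lemma ins_D: "r < 3 * Suc d + 1 \<Longrightarrow> ins n d (bD n d + r) = comboI (lam d 1) (bG n d) 1 r (bD n d + r)"
  by (simp add: ins_def bW_def bD_def bG_def)

lemma ins_W: "r < 3 * Suc d + 1 \<Longrightarrow> ins n d (bW n d + r) = comboI (lam d 2) (bG n d) 1 r (bW n d + r)"
  by (simp add: ins_def bI_def bW_def bD_def bG_def)

lemma ins_I: "i < n \<Longrightarrow> r < SS d \<Longrightarrow> ins n d (bI n d + i * SS d + r) = Iins n d i r (bI n d + i * SS d + r)"
proof -
  assume a: "i < n" "r < SS d"
  have "\<not> bI n d + i * SS d + r < bI n d" by simp
  moreover have "bI n d \<ge> bW n d" "bW n d \<ge> bD n d" "bD n d \<ge> bG n d" "bG n d \<ge> n"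
    by (simp_all add: bI_def bW_def bD_def bG_def)
  moreover have "(i * SS d + r) div SS d = i" "(i * SS d + r) mod SS d = r"
    using a by (simp_all add: SS_def)
  ultimately show ?thesis unfolding ins_def by (simp add: add.assoc)
qed



lemma peval_cong: "(\<forall>l<n. z l = z' l) \<Longrightarrow> peval n c z = peval n c z'"
  unfolding peval_def by (intro sum.cong refl arg_cong2[where f="(*)"] prod.cong) auto

lemma peval_of_real: "peval n c (\<lambda>l. complex_of_real (z l)) = complex_of_real (peval n c z)"
  unfolding peval_def by (simp add: of_real_sum of_real_mult of_real_prod of_real_power)

lemma oracle_val:
  assumes "length args = n" "\<forall>l<n. R' (args ! l) = complex_of_real (z l)"
  shows "peval n c (\<lambda>l. if l < length args then R' (args ! l) else 0) = complex_of_real (peval n c z)"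
proof -
  have "peval n c (\<lambda>l. if l < length args then R' (args ! l) else 0) = peval n c (\<lambda>l. complex_of_real (z l))"
    using assms by (intro peval_cong) auto
  then show ?thesis by (simp add: peval_of_real)
qed

lemma dm4: "t < 4 \<Longrightarrow> (4 * c + t) div 4 = c \<and> (4 * c + t) mod 4 = (t::nat)"
  by auto

lemma dmn: "j < n \<Longrightarrow> (k * n + j) div n = k \<and> (k * n + j) mod n = (j::nat)"
  by (auto simp: add.commute)

context
  fixes c :: "(nat \<Rightarrow> nat) \<Rightarrow> real" and n d :: nat and x w :: "nat \<Rightarrow> real"
begin

abbreviation "R \<equiv> RR (peval n c) x w n d"

lemma RX: "j < n \<Longrightarrow> R j = of_real (x j)"
proof -
  assume j: "j < n"
  have "j < LL n d" using j by (simp add: LL_def bI_def bW_def bD_def bG_def)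
  then show ?thesis using RR_eq[of j n d] ins_X[OF j] by simp
qed

lemma RV: assumes k: "k < Suc d" and j: "j < n"
  shows "R (Vr n k j) = of_real (x j + real k * w j)"
proof -
  define q where "q = 4 * (k * n + j)"
  have q4: "q + 3 < 4 * (Suc d * n)" using kn_lt[OF k j] unfolding q_def by simp
  have lt: "n + (q + t) < LL n d" if "t < 4" for t
  proof -
    have "n + (q + t) < bG n d" using q4 that by (simp add: bG_def)
    then show ?thesis by (simp add: LL_def bI_def bW_def bD_def)
  qed
  have dq: "(q + t) div 4 = k * n + j" "(q + t) mod 4 = t" if "t < 4" for t
    using dm4[OF that, of "k * n + j"] that unfolding q_def by (simp_all add: add.commute)
  have dn: "(k * n + j) div n = k" "(k * n + j) mod n = j" using dmn[OF j] by auto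
  have i0: "ins n d (n + (q + 0)) = IW j" using ins_V[of "q + 0" d n] q4 dq[of 0] dn by (simp add: Vins_def)
  have i1: "ins n d (n + (q + 1)) = IConst (of_nat k)" using ins_V[of "q + 1" d n] q4 dq[of 1] dn by (simp add: Vins_def)
  have i2: "ins n d (n + (q + 2)) = IMul (n + (q + 0)) (n + (q + 1))" using ins_V[of "q + 2" d n] q4 dq[of 2] dn by (simp add: Vins_def)
  have i3: "ins n d (n + (q + 3)) = IAdd j (n + (q + 2))" using ins_V[of "q + 3" d n] q4 dq[of 3] dn by (simp add: Vins_def)
  have r0: "R (n + (q + 0)) = of_real (w j)" using RR_eq[OF lt[of 0]] i0 by simp
  have r1: "R (n + (q + 1)) = of_nat k" using RR_eq[OF lt[of 1]] i1 by simp
  have r2: "R (n + (q + 2)) = of_real (w j) * of_nat k" using RR_eq[OF lt[of 2]] i2 r0 r1 by simp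
  have r3: "R (n + (q + 3)) = of_real (x j) + of_real (w j) * of_nat k"
    using RR_eq[OF lt[of 3]] i3 r2 RX[OF j] j by simp
  have "Vr n k j = n + (q + 3)" by (simp add: Vr_def q_def)
  then show ?thesis using r3 by (simp add: algebra_simps)
qed

lemma Vr_lt: "k < Suc d \<Longrightarrow> j < n \<Longrightarrow> Vr n k j < bG n d"
  using kn_lt[of k d j n] by (simp add: Vr_def bG_def)

lemma Vr_ge: "n \<le> Vr n k j" by (simp add: Vr_def)

lemma RG: assumes k: "k < Suc d"
  shows "R (bG n d + k) = of_real (peval n c (\<lambda>j. x j + real k * w j))"
proof -
  have lt: "bG n d + k < LL n d" using k by (simp add: LL_def bI_def bW_def bD_def)
  have refs: "\<forall>a\<in>refs (ins n d (bG n d + k)). a < bG n d + k"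
    using ins_G[OF k, of n] Vr_lt[OF k] by (auto intro: trans_less_add1)
  have "R (bG n d + k) = peval n c (\<lambda>l. if l < length (map (Vr n k) [0..<n]) then R (map (Vr n k) [0..<n] ! l) else 0)"
    using RR_eq[OF lt refs] ins_G[OF k, of n] by simp
  also have "\<dots> = of_real (peval n c (\<lambda>j. x j + real k * w j))"
    by (rule oracle_val) (simp_all add: RV[OF k])
  finally show ?thesis .
qed

lemma combo:
  assumes ins: "\<forall>r<3 * Suc d + 1. ins n d (cb + r) = comboI l src st r (cb + r)"
    and lt: "cb + 3 * Suc d < LL n d" and src: "\<forall>k<Suc d. src + st * k < cb"
  shows "k' \<le> Suc d \<Longrightarrow> R (cb + 3 * k') = (\<Sum>k<k'. of_real (l k) * R (src + st * k))"
proof (induction k')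
  case 0
  have "ins n d (cb + 0) = IConst 0" using ins[rule_format, of 0] by (simp add: comboI_def)
  then show ?case using RR_eq[of "cb + 0" n d] lt by simp
next
  case (Suc k)
  have k: "k < Suc d" using Suc.prems by simp
  have lt1: "cb + (3 * k + t) < LL n d" if "t \<le> 3" for t using lt Suc.prems that by simp
  have m3: "Suc (3 * k) div 3 = k" "Suc (3 * k) mod 3 = 1" "Suc (Suc (3 * k)) mod 3 = 2"
    "(3 * k) div 3 = k" "(3 * k) mod 3 = 0" by presburger+
  have i1: "ins n d (cb + (3 * k + 1)) = IConst (of_real (l k))"
    using ins[rule_format, of "3 * k + 1"] Suc.prems m3 by (simp add: comboI_def)
  have i2: "ins n d (cb + (3 * k + 2)) = IMul (cb + (3 * k + 1)) (src + st * k)"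
    using ins[rule_format, of "3 * k + 2"] Suc.prems m3 by (simp add: comboI_def)
  have i3: "ins n d (cb + (3 * k + 3)) = IAdd (cb + 3 * k) (cb + (3 * k + 2))"
    using ins[rule_format, of "3 * k + 3"] Suc.prems m3 by (simp add: comboI_def)
  have r1: "R (cb + (3 * k + 1)) = of_real (l k)" using RR_eq[OF lt1[of 1]] i1 by simp
  have r2: "R (cb + (3 * k + 2)) = of_real (l k) * R (src + st * k)"
  proof -
    have sk: "src + st * k < cb" using src k by blast
    then show ?thesis using RR_eq[OF lt1[of 2]] i2 r1 by simp
  qed
  have r3: "R (cb + (3 * k + 3)) = R (cb + 3 * k) + of_real (l k) * R (src + st * k)"
    using RR_eq[OF lt1[of 3]] i3 r2 by simp
  show ?case using r3 Suc by (simp add: add.commute)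
qed

end



context
  fixes c :: "(nat \<Rightarrow> nat) \<Rightarrow> real" and n d :: nat and x w :: "nat \<Rightarrow> real" and i :: nat
  assumes i: "i < n"
begin

definition "bb = bI n d + i * SS d"

lemma lt_b: "r < SS d \<Longrightarrow> bb + r < LL n d"
proof -
  assume r: "r < SS d"
  have "i * SS d + r < Suc i * SS d" using r by simp
  also have "\<dots> \<le> n * SS d" using i by (intro mult_le_mono1) simp
  finally show ?thesis unfolding bb_def LL_def by simp
qed

lemma ins_b: "r < SS d \<Longrightarrow> ins n d (bb + r) = Iins n d i r (bb + r)"
  unfolding bb_def using ins_I[OF i] by simp

lemma bb_ge: "bG n d + Suc d + 6 * Suc d + 2 \<le> bb" "n \<le> bb" "bG n d \<le> bb" "bD n d + 3 * Suc d < bb" "bW n d + 3 * Suc d < bb"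
  by (simp_all add: bb_def bI_def bW_def bD_def bG_def)

lemma R_b: "r < SS d \<Longrightarrow> \<forall>a\<in>refs (Iins n d i r (bb + r)). a < bb + r \<Longrightarrow>
   R c n d x w (bb + r) = ival (peval n c) x w (R c n d x w) (Iins n d i r (bb + r))"
  using RR_eq[OF lt_b] ins_b by simp

lemma RI: assumes k: "k < Suc d"
  shows "R c n d x w (bb + 2 + 5 * k) = of_real (peval n c (\<lambda>j. x j + real k * dl i j))"
    and "R c n d x w (bb + 4 + 5 * k) = of_real (peval n c (\<lambda>j. x j + real k * (dl i j + w j)))"
proof -
  have lt5: "5 * k + t < 5 * Suc d" if "t < 5" for t using k that by simp
  have ltS: "5 * k + t < SS d" if "t < 5" for t using lt5[OF that] by (simp add: SS_def)
  have dm: "(5 * k + t) div 5 = k" "(5 * k + t) mod 5 = t" if "t < 5" for t using that by auto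
  have I: "Iins n d i (5 * k + t) (bb + (5 * k + t)) =
     (if t = 0 then IConst (of_nat k)
      else if t = 1 then IAdd i (bb + (5 * k + t) - 1)
      else if t = 2 then IOracle ([0..<n][i := bb + (5 * k + t) - 1])
      else if t = 3 then IAdd (Vr n k i) (bb + (5 * k + t) - 3)
      else IOracle ((map (Vr n k) [0..<n])[i := bb + (5 * k + t) - 1]))" if "t < 5" for t
    using lt5[OF that] dm[OF that] unfolding Iins_def Let_def by simp
  define m0 where "m0 = bb + (5 * k + 0)"
  define m1 where "m1 = bb + (5 * k + 1)"
  define m2 where "m2 = bb + (5 * k + 2)"
  define m3 where "m3 = bb + (5 * k + 3)"
  define m4 where "m4 = bb + (5 * k + 4)"
  have i0: "Iins n d i (5 * k + 0) m0 = IConst (of_nat k)" using I[of 0] unfolding m0_def by simp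
  have i1: "Iins n d i (5 * k + 1) m1 = IAdd i m0" using I[of 1] unfolding m1_def m0_def by simp
  have i2: "Iins n d i (5 * k + 2) m2 = IOracle ([0..<n][i := m1])" using I[of 2] unfolding m2_def m1_def by simp
  have i3: "Iins n d i (5 * k + 3) m3 = IAdd (Vr n k i) m0" using I[of 3] unfolding m3_def m0_def by simp
  have i4: "Iins n d i (5 * k + 4) m4 = IOracle ((map (Vr n k) [0..<n])[i := m3])" using I[of 4] unfolding m4_def m3_def by (simp add: ac_simps)
  have Rb: "R c n d x w m = ival (peval n c) x w (R c n d x w) (Iins n d i (5 * k + t) m)"
    if "m = bb + (5 * k + t)" "t < 5" "\<forall>a\<in>refs (Iins n d i (5 * k + t) m). a < m" for m t
    using R_b[OF ltS[OF that(2)]] that by simp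
  have o: "m0 < m1" "m1 < m2" "m2 < m3" "m3 < m4" "i < m0" "n \<le> m0"
    using i bb_ge unfolding m0_def m1_def m2_def m3_def m4_def by linarith+
  have r0: "R c n d x w m0 = of_nat k"
    using Rb[OF m0_def] i0 by simp
  have r1: "R c n d x w m1 = of_real (x i + real k)"
    using Rb[OF m1_def] i1 r0 RX[OF i] o by simp
  have r3: "R c n d x w m3 = of_real (x i + real k * w i + real k)"
  proof -
    have "Vr n k i < m3" using Vr_lt[OF k i] bb_ge unfolding m3_def by linarith
    then show ?thesis using Rb[OF m3_def] i3 r0 RV[OF k i] o by simp
  qed
  have set1: "set ([0..<n][i := m1]) \<subseteq> insert m1 {0..<n}"
    using set_update_subset_insert by fastforce
  have "\<forall>a\<in>refs (Iins n d i (5 * k + 2) m2). a < m2"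
  proof
    fix a assume "a \<in> refs (Iins n d i (5 * k + 2) m2)"
    then have "a \<in> insert m1 {0..<n}" using i2 set1 by auto
    then show "a < m2" using o by auto
  qed
  then have "R c n d x w m2 =
     peval n c (\<lambda>l. if l < length ([0..<n][i := m1]) then R c n d x w (([0..<n][i := m1]) ! l) else 0)"
    using Rb[OF m2_def] i2 by simp
  also have "\<dots> = of_real (peval n c (\<lambda>j. x j + real k * dl i j))"
  proof (rule oracle_val)
    show "\<forall>l<n. R c n d x w ([0..<n][i := m1] ! l) = complex_of_real (x l + real k * dl i l)"
      using r1 RX by (auto simp: nth_list_update dl_def)
  qed simp
  finally show "R c n d x w (bb + 2 + 5 * k) = of_real (peval n c (\<lambda>j. x j + real k * dl i j))"
    unfolding m2_def by (simp add: add.commute add.left_commute)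
  have set2: "set ((map (Vr n k) [0..<n])[i := m3]) \<subseteq> insert m3 (Vr n k ` {0..<n})"
    using set_update_subset_insert by fastforce
  have "\<forall>j<n. Vr n k j < m4" using Vr_lt[OF k] bb_ge unfolding m4_def by (meson less_le_trans trans_less_add1)
  then have "\<forall>a\<in>refs (Iins n d i (5 * k + 4) m4). a < m4"
    using i4 set2 o by fastforce
  then have "R c n d x w m4 =
     peval n c (\<lambda>l. if l < length ((map (Vr n k) [0..<n])[i := m3]) then R c n d x w (((map (Vr n k) [0..<n])[i := m3]) ! l) else 0)"
    using Rb[OF m4_def] i4 by simp
  also have "\<dots> = of_real (peval n c (\<lambda>j. x j + real k * (dl i j + w j)))"
  proof (rule oracle_val)
    show "\<forall>l<n. R c n d x w ((map (Vr n k) [0..<n])[i := m3] ! l) = complex_of_real (x l + real k * (dl i l + w l))"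
      using r3 RV[OF k] by (auto simp: nth_list_update dl_def algebra_simps)
  qed simp
  finally show "R c n d x w (bb + 4 + 5 * k) = of_real (peval n c (\<lambda>j. x j + real k * (dl i j + w j)))"
    unfolding m4_def by (simp add: add.commute add.left_commute)
qed

end



lemma sum_conv: "(\<Sum>k<Suc d. complex_of_real (a k) * complex_of_real (p k)) = complex_of_real (\<Sum>k\<le>d. a k * p k)"
  by (simp add: lessThan_Suc_atMost of_real_sum)

context
  fixes c :: "(nat \<Rightarrow> nat) \<Rightarrow> real" and n d :: nat and x w :: "nat \<Rightarrow> real" and e :: ex
  assumes h: "homog_poly n d c" and e: "\<forall>y. ev e y = peval n c y"
begin

lemma bG_lt: "bG n d + 3 * Suc d < bD n d + 3 * Suc d" by (simp add: bD_def)

lemma LL_gt: "0 < n \<Longrightarrow> bI n d < LL n d" by (simp add: LL_def SS_def)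

lemma RD: "0 < n \<Longrightarrow> R c n d x w (bD n d + 3 * Suc d) = of_real (ev (dE e w) x)"
proof -
  assume n: "0 < n"
  have lt: "bD n d + 3 * Suc d < LL n d" using LL_gt[OF n] by (simp add: bI_def bW_def)
  have src: "\<forall>k<Suc d. bG n d + 1 * k < bD n d" by (simp add: bD_def)
  have "R c n d x w (bD n d + 3 * Suc d) = (\<Sum>k<Suc d. of_real (lam d 1 k) * R c n d x w (bG n d + 1 * k))"
    using combo[where cb="bD n d" and l="lam d 1" and src="bG n d" and st=1 and k'="Suc d"] ins_D lt src by simp
  also have "\<dots> = (\<Sum>k<Suc d. of_real (lam d 1 k) * of_real (peval n c (\<lambda>j. x j + real k * w j)))"
    by (intro sum.cong refl) (simp add: RG)
  also have "\<dots> = of_real (ev (dE e w) x)"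
    unfolding sum_conv interp(1)[OF h e] ..
  finally show ?thesis .
qed

lemma RW: "0 < n \<Longrightarrow> R c n d x w (bW n d + 3 * Suc d) = of_real (ev (dE (dE e w) w) x / 2)"
proof -
  assume n: "0 < n"
  have lt: "bW n d + 3 * Suc d < LL n d" using LL_gt[OF n] by (simp add: bI_def)
  have src: "\<forall>k<Suc d. bG n d + 1 * k < bW n d" by (simp add: bW_def bD_def)
  have "R c n d x w (bW n d + 3 * Suc d) = (\<Sum>k<Suc d. of_real (lam d 2 k) * R c n d x w (bG n d + 1 * k))"
    using combo[where cb="bW n d" and l="lam d 2" and src="bG n d" and st=1 and k'="Suc d"] ins_W lt src by simp
  also have "\<dots> = (\<Sum>k<Suc d. of_real (lam d 2 k) * of_real (peval n c (\<lambda>j. x j + real k * w j)))"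
    by (intro sum.cong refl) (simp add: RG)
  also have "\<dots> = of_real (ev (dE (dE e w) w) x / 2)"
    unfolding sum_conv interp(2)[OF h e] ..
  finally show ?thesis .
qed

lemma RP0: "0 < n \<Longrightarrow> R c n d x w (bG n d) = of_real (peval n c x)"
  using RG[where k=0] by simp

lemma combo_i:
  assumes i: "i < n" and a: "a + 3 * Suc d + 1 \<le> SS d"
    and ins: "\<And>r. r < 3 * Suc d + 1 \<Longrightarrow> Iins n d i (a + r) (bb n d i + (a + r)) = comboI l (bb n d i + s) 5 r (bb n d i + (a + r))"
    and src: "s + 5 * d < a"
    and vals: "\<And>k. k < Suc d \<Longrightarrow> R c n d x w (bb n d i + s + 5 * k) = of_real (p k)"
  shows "R c n d x w (bb n d i + a + 3 * Suc d) = of_real (\<Sum>k\<le>d. l k * p k)"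
proof -
  have ins': "\<forall>r<3 * Suc d + 1. ins n d (bb n d i + a + r) = comboI l (bb n d i + s) 5 r (bb n d i + a + r)"
  proof (intro allI impI)
    fix r assume r: "r < 3 * Suc d + 1"
    have "a + r < SS d" using r a by simp
    then have "ins n d (bb n d i + (a + r)) = Iins n d i (a + r) (bb n d i + (a + r))" by (rule ins_b[OF i])
    then show "ins n d (bb n d i + a + r) = comboI l (bb n d i + s) 5 r (bb n d i + a + r)"
      using ins[OF r] by (simp add: add.assoc)
  qed
  have lt: "bb n d i + a + 3 * Suc d < LL n d"
    using lt_b[OF i, where r="a + 3 * Suc d"] a by (simp add: add.assoc)
  have srcs: "\<forall>k<Suc d. bb n d i + s + 5 * k < bb n d i + a" using src by auto
  have "R c n d x w (bb n d i + a + 3 * Suc d) = (\<Sum>k<Suc d. of_real (l k) * R c n d x w (bb n d i + s + 5 * k))"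
    using combo[where cb="bb n d i + a" and l=l and src="bb n d i + s" and st=5 and k'="Suc d"] ins' lt srcs by simp
  also have "\<dots> = (\<Sum>k<Suc d. of_real (l k) * of_real (p k))"
    by (intro sum.cong refl) (simp add: vals)
  finally show ?thesis unfolding sum_conv .
qed

end



context
  fixes c :: "(nat \<Rightarrow> nat) \<Rightarrow> real" and n d :: nat and x w :: "nat \<Rightarrow> real" and e :: ex and i :: nat
  assumes h: "homog_poly n d c" and e: "\<forall>y. ev e y = peval n c y" and vb: "vb n e" and i: "i < n"
    and nz: "peval n c x \<noteq> (0::real)"
begin

lemma Rout: "R c n d x w (bb n d i + (14 * Suc d + 9)) = of_real (hess_vec n (\<lambda>y. - ln \<bar>peval n c y\<bar>) x w i)"
proof -
  have n: "0 < n" using i by simp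
  let ?b = "bb n d i"
  have g: "R c n d x w (?b + 5 * Suc d + 3 * Suc d) = of_real (ev (dE e (dl i)) x)"
  proof -
    have "R c n d x w (?b + 5 * Suc d + 3 * Suc d) = of_real (\<Sum>k\<le>d. lam d 1 k * peval n c (\<lambda>j. x j + real k * dl i j))"
      apply (rule combo_i[OF h e i, where s=2])
         apply (simp add: SS_def)
        apply (simp add: Iins_def Let_def)
       apply simp
      apply (erule RI(1)[OF i])
      done
    also have "\<dots> = of_real (ev (dE e (dl i)) x)" by (simp only: interp(1)[OF h e])
    finally show ?thesis .
  qed
  have E2: "R c n d x w (?b + (8 * Suc d + 1) + 3 * Suc d) = of_real (ev (dE (dE e (dl i)) (dl i)) x / 2)"
  proof -
    have "R c n d x w (?b + (8 * Suc d + 1) + 3 * Suc d) = of_real (\<Sum>k\<le>d. lam d 2 k * peval n c (\<lambda>j. x j + real k * dl i j))"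
      apply (rule combo_i[OF h e i, where s=2])
         apply (simp add: SS_def)
        apply (simp add: Iins_def Let_def)
       apply simp
      apply (erule RI(1)[OF i])
      done
    also have "\<dots> = of_real (ev (dE (dE e (dl i)) (dl i)) x / 2)" by (simp only: interp(2)[OF h e])
    finally show ?thesis .
  qed
  have F2: "R c n d x w (?b + (11 * Suc d + 2) + 3 * Suc d) = of_real (ev (dE (dE e (\<lambda>k. dl i k + w k)) (\<lambda>k. dl i k + w k)) x / 2)"
  proof -
    have "R c n d x w (?b + (11 * Suc d + 2) + 3 * Suc d) = of_real (\<Sum>k\<le>d. lam d 2 k * peval n c (\<lambda>j. x j + real k * (dl i j + w j)))"
      apply (rule combo_i[OF h e i, where s=4])
         apply (simp add: SS_def)
        apply (simp add: Iins_def Let_def)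
       apply simp
      apply (erule RI(2)[OF i])
      done
    also have "\<dots> = of_real (ev (dE (dE e (\<lambda>k. dl i k + w k)) (\<lambda>k. dl i k + w k)) x / 2)"
      by (simp only: interp(2)[OF h e])
    finally show ?thesis .
  qed
  define o0 where "o0 = ?b + (14 * Suc d + 3)"
  define o1 where "o1 = ?b + (14 * Suc d + 4)"
  define o2 where "o2 = ?b + (14 * Suc d + 5)"
  define o3 where "o3 = ?b + (14 * Suc d + 6)"
  define o4 where "o4 = ?b + (14 * Suc d + 7)"
  define o5 where "o5 = ?b + (14 * Suc d + 8)"
  define o6 where "o6 = ?b + (14 * Suc d + 9)"
  define gi where "gi = ?b + 5 * Suc d + 3 * Suc d"
  define ei where "ei = ?b + (8 * Suc d + 1) + 3 * Suc d"
  define fi where "fi = ?b + (11 * Suc d + 2) + 3 * Suc d"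
  have I0: "Iins n d i (14 * Suc d + 3) o0 = ISub fi ei"
    unfolding o0_def fi_def ei_def Iins_def Let_def by (simp add: algebra_simps)
  have I1: "Iins n d i (14 * Suc d + 4) o1 = ISub o0 (bW n d + 3 * Suc d)"
    unfolding o1_def o0_def Iins_def Let_def by (simp add: algebra_simps)
  have I2: "Iins n d i (14 * Suc d + 5) o2 = IDiv o1 (bG n d)"
    unfolding o2_def o1_def Iins_def Let_def by (simp add: algebra_simps)
  have I3: "Iins n d i (14 * Suc d + 6) o3 = IMul gi (bD n d + 3 * Suc d)"
    unfolding o3_def gi_def Iins_def Let_def by (simp add: algebra_simps)
  have I4: "Iins n d i (14 * Suc d + 7) o4 = IMul (bG n d) (bG n d)"
    unfolding o4_def Iins_def Let_def by (simp add: algebra_simps)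
  have I5: "Iins n d i (14 * Suc d + 8) o5 = IDiv o3 o4"
    unfolding o5_def o3_def o4_def Iins_def Let_def by (simp add: algebra_simps)
  have I6: "Iins n d i (14 * Suc d + 9) o6 = ISub o5 o2"
    unfolding o6_def o5_def o2_def Iins_def Let_def by (simp add: algebra_simps)
  have bbg: "bG n d \<le> ?b" "bD n d + 3 * Suc d < ?b" "bW n d + 3 * Suc d < ?b"
    using bb_ge[OF i] by auto
  have ord: "fi < o0" "ei < o0" "o0 < o1" "o1 < o2" "gi < o3" "o3 < o5" "o4 < o5" "o2 < o6" "o5 < o6"
    "bW n d + 3 * Suc d < o1" "bG n d < o2" "bD n d + 3 * Suc d < o3" "bG n d < o4"
    unfolding o0_def o1_def o2_def o3_def o4_def o5_def o6_def gi_def ei_def fi_def using bbg by linarith+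
  have S: "14 * Suc d + t < SS d" if "t \<le> 9" for t using that by (simp add: SS_def)
  have Rb: "R c n d x w m = ival (peval n c) x w (R c n d x w) (Iins n d i (14 * Suc d + t) m)"
    if "m = ?b + (14 * Suc d + t)" "t \<le> 9" "\<forall>a\<in>refs (Iins n d i (14 * Suc d + t) m). a < m" for m t
    using R_b[OF i S[OF that(2)]] that by simp
  have P0: "R c n d x w (bG n d) = of_real (peval n c x)" by (rule RP0[OF h e n])
  have D: "R c n d x w (bD n d + 3 * Suc d) = of_real (ev (dE e w) x)" by (rule RD[OF h e n])
  have W: "R c n d x w (bW n d + 3 * Suc d) = of_real (ev (dE (dE e w) w) x / 2)" by (rule RW[OF h e n])
  have v0: "R c n d x w o0 = R c n d x w fi - R c n d x w ei" using Rb[OF o0_def] I0 ord by simp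
  have v1: "R c n d x w o1 = R c n d x w o0 - R c n d x w (bW n d + 3 * Suc d)" using Rb[OF o1_def] I1 ord by simp
  have v2: "R c n d x w o2 = R c n d x w o1 / R c n d x w (bG n d)" using Rb[OF o2_def] I2 ord by simp
  have v3: "R c n d x w o3 = R c n d x w gi * R c n d x w (bD n d + 3 * Suc d)" using Rb[OF o3_def] I3 ord by simp
  have v4: "R c n d x w o4 = R c n d x w (bG n d) * R c n d x w (bG n d)" using Rb[OF o4_def] I4 ord by simp
  have v5: "R c n d x w o5 = R c n d x w o3 / R c n d x w o4" using Rb[OF o5_def] I5 ord by simp
  have v6: "R c n d x w o6 = R c n d x w o5 - R c n d x w o2" using Rb[OF o6_def] I6 ord by simp
  let ?P = "peval n c x" and ?g = "ev (dE e (dl i)) x" and ?D = "ev (dE e w) x"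
  let ?M = "ev (dE (dE e (\<lambda>k. dl i k + w k)) (\<lambda>k. dl i k + w k)) x / 2 - ev (dE (dE e (dl i)) (dl i)) x / 2 - ev (dE (dE e w) w) x / 2"
  have "R c n d x w o6 = of_real (?g * ?D / (?P * ?P) - ?M / ?P)"
    unfolding v6 v5 v4 v3 v2 v1 v0 P0 D W g[folded gi_def] E2[folded ei_def] F2[folded fi_def] by simp
  also have "?M = ev (dE (dE e (dl i)) w) x" by (rule polar)
  also have "?g * ?D / (?P * ?P) - ev (dE (dE e (dl i)) w) x / ?P = hess_vec n (\<lambda>y. - ln \<bar>peval n c y\<bar>) x w i"
    using hess_vec_eq[OF vb e nz, of w i] by (simp add: power2_eq_square)
  finally show ?thesis unfolding o6_def .
qed

end



lemma instr_cost_le: "1 \<le> T \<Longrightarrow> instr_cost T ii \<le> T"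
  by (cases ii) auto

lemma prog_cost_le: "1 \<le> T \<Longrightarrow> prog_cost T P \<le> real (length P) * T"
proof (induction P)
  case Nil then show ?case by (simp add: prog_cost_def)
next
  case (Cons a P)
  have "prog_cost T (a # P) = instr_cost T a + prog_cost T P" by (simp add: prog_cost_def)
  also have "\<dots> \<le> T + real (length P) * T" using Cons instr_cost_le[OF Cons.prems, of a] by simp
  finally show ?case by (simp add: algebra_simps)
qed

lemma LL_bound: "0 < n \<Longrightarrow> 0 < d \<Longrightarrow> LL n d \<le> 100 * n * d ^ 2"
proof -
  assume n: "0 < n" and d: "0 < d"
  have e1: "LL n d = n * (18 * d + 29) + 7 * d + 9"
    by (simp add: LL_def bI_def bW_def bD_def bG_def SS_def algebra_simps)
  have a: "d \<le> d * d" using d by simp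
  have b: "1 \<le> d * d" using d by (simp add: Suc_le_eq)
  have nn: "d * d \<le> n * (d * d)" using n by simp
  have c1: "n * d \<le> n * (d * d)" using a by simp
  have c2: "n \<le> n * (d * d)" using b by simp
  have c3: "d \<le> n * (d * d)" using a nn by (rule le_trans)
  have c4: "1 \<le> n * (d * d)" using b nn by (rule le_trans)
  have ex: "n * (18 * d + 29) = 18 * (n * d) + 29 * n" by (simp add: algebra_simps)
  have "n * (18 * d + 29) + 7 * d + 9 \<le> 100 * (n * (d * d))"
    unfolding ex using c1 c2 c3 c4 by linarith
  then show ?thesis unfolding e1 by (simp add: power2_eq_square mult.assoc)
qed

theorem lemmaD3:
  "\<exists>C::real. \<forall>n d::nat. 0 < d \<longrightarrow>
     (\<exists>(P::instr list) (outs::nat list).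
        length outs = n \<and>
        (\<forall>T::real. T \<ge> 1 \<longrightarrow> prog_cost T P \<le> C * real n * real d ^ 2 * T) \<and>
        (\<forall>c. hyperbolic_poly n d c \<longrightarrow>
           (\<forall>x w :: nat \<Rightarrow> real. peval n c x \<noteq> (0::real) \<longrightarrow>
              (\<forall>i<n. reg (run (peval n c) x w P) (outs ! i)
                     = of_real (hess_vec n (\<lambda>y. - ln \<bar>peval n c y\<bar>) x w i)))))"
proof (intro exI[of _ 100] allI impI)
  fix n d :: nat assume d: "0 < d"
  show "\<exists>(P::instr list) (outs::nat list).
        length outs = n \<and>
        (\<forall>T::real. T \<ge> 1 \<longrightarrow> prog_cost T P \<le> 100 * real n * real d ^ 2 * T) \<and>
        (\<forall>c. hyperbolic_poly n d c \<longrightarrow>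
           (\<forall>x w :: nat \<Rightarrow> real. peval n c x \<noteq> (0::real) \<longrightarrow>
              (\<forall>i<n. reg (run (peval n c) x w P) (outs ! i)
                     = of_real (hess_vec n (\<lambda>y. - ln \<bar>peval n c y\<bar>) x w i))))"
  proof (cases "n = 0")
    case True
    then show ?thesis by (intro exI[of _ "[]"]) (simp add: prog_cost_def)
  next
    case False
    then have n: "0 < n" by simp
    let ?outs = "map (\<lambda>i. bb n d i + (14 * Suc d + 9)) [0..<n]"
    show ?thesis
    proof (intro exI[of _ "prog n d"] exI[of _ ?outs] conjI allI impI)
      show "length ?outs = n" by simp
    next
      fix T :: real assume T: "1 \<le> T"
      have "prog_cost T (prog n d) \<le> real (LL n d) * T"
        using prog_cost_le[OF T, of "prog n d"] by (simp add: prog_def)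
      also have "\<dots> \<le> real (100 * n * d ^ 2) * T"
      proof (rule mult_right_mono)
        show "real (LL n d) \<le> real (100 * n * d ^ 2)" using LL_bound[OF n d] by (simp only: of_nat_le_iff)
      qed (use T in simp)
      finally show "prog_cost T (prog n d) \<le> 100 * real n * real d ^ 2 * T" by simp
    next
      fix c x w i
      assume hyp: "hyperbolic_poly n d c" and nz: "peval n c x \<noteq> (0::real)" and i: "i < n"
      have h: "homog_poly n d c" using hyp by (simp add: hyperbolic_poly_def)
      then have "is_poly n c" by (simp add: homog_poly_def)
      then obtain e where vb: "vb n e" and e: "\<forall>y. ev e y = peval n c y"
        using repr_peval unfolding repr_def by blast
      have "reg (run (peval n c) x w (prog n d)) (?outs ! i) = R c n d x w (bb n d i + (14 * Suc d + 9))"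
        using i by (simp add: RR_def)
      also have "\<dots> = of_real (hess_vec n (\<lambda>y. - ln \<bar>peval n c y\<bar>) x w i)"
        by (rule Rout[OF h e vb i nz])
      finally show "reg (run (peval n c) x w (prog n d)) (?outs ! i) = of_real (hess_vec n (\<lambda>y. - ln \<bar>peval n c y\<bar>) x w i)" .
    qed
  qed
qed

end
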